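(* Let $\mathcal{A}=(\Sigma,Q,q_0,\delta,F)$ be an alternating Büchi automaton and let $p\in\Sigma$. If $\mathcal{A}$ is nondeterministic, then $\mathcal{A}$ is in existential normal form for $p$. If $\mathcal{A}$ is universal, then $\mathcal{A}$ is in universal normal form for $p$. If $\mathcal{A}$ is deterministic, then $\mathcal{A}$ is in both existential and universal normal form for $p$.
   Context: Let $\Sigma$ be a finite set of Boolean variables; words are infinite sequences $w\in(2^\Sigma)^\omega$ with $k$-th letter $w[k]$. $L_\Sigma=\Sigma\cup\{\neg a: a\in\Sigma\}$ is the set of literals; in a letter $\sigma\subseteq\Sigma$ the literal $a$ is true iff $a\in\sigma$ and $\neg a$ is true iff $a\notin\sigma$. $\mathbb{B}^+(S)$ denotes positive Boolean formulas (built from atoms in $S$, $\wedge$, $\vee$, true, false). An alternating Büchi automaton is $\mathcal{A}=(\Sigma,Q,q_0,\delta,F)$ with finite state set $Q$, initial state $q_0$, transition function $\delta:Q\to\mathbb{B}^+(Q\cup L_\Sigma)$ (elements of $Q\cup L_\Sigma$ are treated as atoms), and $F\subseteq Q$. A set $X\subseteq Q\cup L_\Sigma$ satisfies $\delta(q)$ if $\delta(q)$ evaluates to true when exactly the atoms in $X$ are true. A run on $w$ is a $Q$-labeled tree whose root is labeled $q_0$ such that for every node at depth $k$ labeled $q$, with $S$ the set of labels of its children, $S\cup\{\ell\in L_\Sigma:\ell \text{ true in } w[k]\}$ satisfies $\delta(q)$; it is accepting if every infinite branch visits $F$ infinitely often; $\mathcal{L}(\mathcal{A})$ is the set of words with an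 accepting run. For $p\in\Sigma$: $\mathcal{L}(\exists p.\mathcal{A})$ is the set of words $w\in(2^{\Sigma\setminus\{p\}})^\omega$ such that some $w'\in(2^\Sigma)^\omega$ with $w'[k]\setminus\{p\}=w[k]$ for all $k$ lies in $\mathcal{L}(\mathcal{A})$; $\mathcal{L}(\forall p.\mathcal{A})$ is the set of such $w$ for which every such $w'$ lies in $\mathcal{L}(\mathcal{A})$. For a formula $B$, $B[p\mapsto 1]$ replaces atom $p$ by true and atom $\neg p$ by false, and $B[p\mapsto 0]$ the reverse. The state-wise existential quantification $\exists^\circ p.\mathcal{A}$ is $(\Sigma\setminus\{p\},Q,q_0,\delta',F)$ with $\delta'(q)=\delta(q)[p\mapsto1]\vee\delta(q)[p\mapsto0]$; the state-wise universal quantification $\forall^\circ p.\mathcal{A}$ is the same with $\delta'(q)=\delta(q)[p\mapsto1]\wedge\delta(q)[p\mapsto0]$. $\mathcal{A}$ is in existential normal form for $p$ if $\mathcal{L}(\exists^\circ p.\mathcal{A})=\mathcal{L}(\exists p.\mathcal{A})$, and in universal normal form for $p$ if $\mathcal{L}(\forall^\circ p.\mathcal{A})=\mathcal{L}(\forall p.\mathcal{A})$. $\mathcal{A}$ is nondeterministic if for every state $q$ the transition formula $\delta(q)$, restricted to its state part, is a disjunction of states (i.e., for every state $q$ and every letter, once the literals are evaluated according to the letter, $\delta(q)$ is equivalent to a disjunction of states); universal if it is analogously a conjunction of states; deterministic in the standard sense (for every state and letter there is a single successor state). *)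

theory Defs
  imports Main
begin

datatype 'a pbf = PTrue | PFalse | Atom 'a | PAnd "'a pbf" "'a pbf" | POr "'a pbf" "'a pbf"

fun sat :: "'a set \<Rightarrow> 'a pbf \<Rightarrow> bool" where
  "sat X PTrue = True"
| "sat X PFalse = False"
| "sat X (Atom a) = (a \<in> X)"
| "sat X (PAnd B C) = (sat X B \<and> sat X C)"
| "sat X (POr B C) = (sat X B \<or> sat X C)"

fun atoms :: "'a pbf \<Rightarrow> 'a set" where
  "atoms PTrue = {}"
| "atoms PFalse = {}"
| "atoms (Atom a) = {a}"
| "atoms (PAnd B C) = atoms B \<union> atoms C"
| "atoms (POr B C) = atoms B \<union> atoms C"

datatype 'v lit = Pos 'v | Neg 'v

definition lits :: "'v set \<Rightarrow> 'v lit set" where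
  "lits \<Sigma> = Pos ` \<Sigma> \<union> Neg ` \<Sigma>"

fun lit_true :: "'v set \<Rightarrow> 'v lit \<Rightarrow> bool" where
  "lit_true \<sigma> (Pos a) = (a \<in> \<sigma>)"
| "lit_true \<sigma> (Neg a) = (a \<notin> \<sigma>)"

datatype ('q, 'v) atom = St 'q | Lit "'v lit"

definition true_lits :: "'v set \<Rightarrow> 'v set \<Rightarrow> ('q, 'v) atom set" where
  "true_lits \<Sigma> \<sigma> = Lit ` {l \<in> lits \<Sigma>. lit_true \<sigma> l}"

fun subst :: "'v \<Rightarrow> bool \<Rightarrow> ('q, 'v) atom pbf \<Rightarrow> ('q, 'v) atom pbf" where
  "subst p b PTrue = PTrue"
| "subst p b PFalse = PFalse"
| "subst p b (Atom (Lit (Pos a))) = (if a = p then (if b then PTrue else PFalse) else Atom (Lit (Pos a)))"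
| "subst p b (Atom (Lit (Neg a))) = (if a = p then (if b then PFalse else PTrue) else Atom (Lit (Neg a)))"
| "subst p b (Atom (St q)) = Atom (St q)"
| "subst p b (PAnd B C) = PAnd (subst p b B) (subst p b C)"
| "subst p b (POr B C) = POr (subst p b B) (subst p b C)"

record ('q, 'v) aba =
  alph :: "'v set"
  states :: "'q set"
  init :: 'q
  trans :: "'q \<Rightarrow> ('q, 'v) atom pbf"
  acc :: "'q set"

definition aba_wf :: "('q, 'v) aba \<Rightarrow> bool" where
  "aba_wf A \<longleftrightarrow> finite (alph A) \<and> finite (states A) \<and> init A \<in> states A
     \<and> acc A \<subseteq> states A
     \<and> (\<forall>q \<in> states A. atoms (trans A q) \<subseteq> St ` states A \<union> Lit ` lits (alph A))"

text \<open>A run: a Q-labelled tree, nodes are lists of child indices (prefix closed set T),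
  labelling r. A node x is at depth length x.\<close>
definition is_run :: "('q, 'v) aba \<Rightarrow> (nat \<Rightarrow> 'v set) \<Rightarrow> nat list set \<Rightarrow> (nat list \<Rightarrow> 'q) \<Rightarrow> bool" where
  "is_run A w T r \<longleftrightarrow> [] \<in> T
     \<and> (\<forall>x i. x @ [i] \<in> T \<longrightarrow> x \<in> T)
     \<and> r [] = init A
     \<and> (\<forall>x \<in> T. r x \<in> states A)
     \<and> (\<forall>x \<in> T. sat ({St (r (x @ [i])) | i. x @ [i] \<in> T} \<union> true_lits (alph A) (w (length x)))
                     (trans A (r x)))"

definition is_branch :: "nat list set \<Rightarrow> (nat \<Rightarrow> nat list) \<Rightarrow> bool" where
  "is_branch T \<pi> \<longleftrightarrow> \<pi> 0 = [] \<and> (\<forall>n. \<exists>i. \<pi> (Suc n) = \<pi> n @ [i] \<and> \<pi> (Suc n) \<in> T)"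

definition accepting :: "('q, 'v) aba \<Rightarrow> nat list set \<Rightarrow> (nat list \<Rightarrow> 'q) \<Rightarrow> bool" where
  "accepting A T r \<longleftrightarrow> (\<forall>\<pi>. is_branch T \<pi> \<longrightarrow> (\<exists>\<^sub>\<infinity>n. r (\<pi> n) \<in> acc A))"

definition lang :: "('q, 'v) aba \<Rightarrow> (nat \<Rightarrow> 'v set) set" where
  "lang A = {w. (\<forall>k. w k \<subseteq> alph A) \<and> (\<exists>T r. is_run A w T r \<and> accepting A T r)}"

definition ex_lang :: "'v \<Rightarrow> ('q, 'v) aba \<Rightarrow> (nat \<Rightarrow> 'v set) set" where
  "ex_lang p A = {w. (\<forall>k. w k \<subseteq> alph A - {p}) \<and>
      (\<exists>w'. (\<forall>k. w' k \<subseteq> alph A) \<and> (\<forall>k. w' k - {p} = w k) \<and> w' \<in> lang A)}"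

definition all_lang :: "'v \<Rightarrow> ('q, 'v) aba \<Rightarrow> (nat \<Rightarrow> 'v set) set" where
  "all_lang p A = {w. (\<forall>k. w k \<subseteq> alph A - {p}) \<and>
      (\<forall>w'. (\<forall>k. w' k \<subseteq> alph A) \<and> (\<forall>k. w' k - {p} = w k) \<longrightarrow> w' \<in> lang A)}"

definition sw_ex :: "'v \<Rightarrow> ('q, 'v) aba \<Rightarrow> ('q, 'v) aba" where
  "sw_ex p A = A\<lparr>alph := alph A - {p},
     trans := (\<lambda>q. POr (subst p True (trans A q)) (subst p False (trans A q)))\<rparr>"

definition sw_all :: "'v \<Rightarrow> ('q, 'v) aba \<Rightarrow> ('q, 'v) aba" where
  "sw_all p A = A\<lparr>alph := alph A - {p},
     trans := (\<lambda>q. PAnd (subst p True (trans A q)) (subst p False (trans A q)))\<rparr>"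

definition ex_nf :: "'v \<Rightarrow> ('q, 'v) aba \<Rightarrow> bool" where
  "ex_nf p A \<longleftrightarrow> lang (sw_ex p A) = ex_lang p A"

definition all_nf :: "'v \<Rightarrow> ('q, 'v) aba \<Rightarrow> bool" where
  "all_nf p A \<longleftrightarrow> lang (sw_all p A) = all_lang p A"

text \<open>For every state q and letter \<sigma>, once literals are evaluated according to \<sigma>,
  \<delta>(q) is equivalent to a disjunction (resp. conjunction) of the states in some D \<subseteq> Q
  (empty disjunction = false, empty conjunction = true), resp. to a single state.\<close>
definition nondet :: "('q, 'v) aba \<Rightarrow> bool" where
  "nondet A \<longleftrightarrow> (\<forall>q \<in> states A. \<forall>\<sigma> \<subseteq> alph A. \<exists>D \<subseteq> states A. \<forall>S \<subseteq> states A.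
      sat (St ` S \<union> true_lits (alph A) \<sigma>) (trans A q) \<longleftrightarrow> S \<inter> D \<noteq> {})"

definition universal :: "('q, 'v) aba \<Rightarrow> bool" where
  "universal A \<longleftrightarrow> (\<forall>q \<in> states A. \<forall>\<sigma> \<subseteq> alph A. \<exists>D \<subseteq> states A. \<forall>S \<subseteq> states A.
      sat (St ` S \<union> true_lits (alph A) \<sigma>) (trans A q) \<longleftrightarrow> D \<subseteq> S)"

definition deterministic :: "('q, 'v) aba \<Rightarrow> bool" where
  "deterministic A \<longleftrightarrow> (\<forall>q \<in> states A. \<forall>\<sigma> \<subseteq> alph A. \<exists>q' \<in> states A. \<forall>S \<subseteq> states A.
      sat (St ` S \<union> true_lits (alph A) \<sigma>) (trans A q) \<longleftrightarrow> q' \<in> S)"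

end

theory Submission
  imports Defs
begin

lemma sat_subst:
  assumes "p \<in> \<Sigma>" "\<forall>a\<in>X. \<exists>q. a = St q" "\<sigma>' - {p} = \<sigma> - {p}" "(p \<in> \<sigma>') = b"
  shows "sat (X \<union> true_lits (\<Sigma> - {p}) \<sigma>) (subst p b B) = sat (X \<union> true_lits \<Sigma> \<sigma>') B"
proof -
  have m: "\<And>a. a \<noteq> p \<Longrightarrow> (a \<in> \<sigma>) = (a \<in> \<sigma>')" using assms(3) by blast
  have nl: "\<And>l. Lit l \<notin> X" using assms(2) by blast
  show ?thesis
  proof (induction B)
    case (Atom x)
    show ?case
    proof (cases x)
      case (St q) then show ?thesis by (auto simp: true_lits_def)
    next
      case (Lit l)
      then show ?thesis using assms(1,4) m nl
        by (cases l) (auto simp: true_lits_def lits_def)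
    qed
  qed auto
qed

lemma sw_ex_simps[simp]:
  "alph (sw_ex p A) = alph A - {p}" "states (sw_ex p A) = states A" "init (sw_ex p A) = init A"
  "acc (sw_ex p A) = acc A"
  "trans (sw_ex p A) q = POr (subst p True (trans A q)) (subst p False (trans A q))"
  by (simp_all add: sw_ex_def)

lemma sw_all_simps[simp]:
  "alph (sw_all p A) = alph A - {p}" "states (sw_all p A) = states A" "init (sw_all p A) = init A"
  "acc (sw_all p A) = acc A"
  "trans (sw_all p A) q = PAnd (subst p True (trans A q)) (subst p False (trans A q))"
  by (simp_all add: sw_all_def)

lemma ex_sub:
  assumes p: "p \<in> alph A" and w: "w \<in> ex_lang p A"
  shows "w \<in> lang (sw_ex p A)"
proof -
  from w obtain w' where wk: "\<forall>k. w k \<subseteq> alph A - {p}" and w'a: "\<forall>k. w' k \<subseteq> alph A"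
    and w'w: "\<forall>k. w' k - {p} = w k" and w'L: "w' \<in> lang A"
    unfolding ex_lang_def by blast
  from w'L obtain T r where run: "is_run A w' T r" and ac: "accepting A T r"
    unfolding lang_def by blast
  have "is_run (sw_ex p A) w T r"
    unfolding is_run_def
  proof (intro conjI ballI)
    fix x assume x: "x \<in> T"
    let ?X = "{St (r (x @ [i])) | i. x @ [i] \<in> T}"
    have s: "sat (?X \<union> true_lits (alph A) (w' (length x))) (trans A (r x))"
      using run x unfolding is_run_def by blast
    have eq: "sat (?X \<union> true_lits (alph A - {p}) (w (length x))) (subst p (p \<in> w' (length x)) (trans A (r x)))
      = sat (?X \<union> true_lits (alph A) (w' (length x))) (trans A (r x))"
      by (rule sat_subst) (use p wk w'w in auto)
    show "sat (?X \<union> true_lits (alph (sw_ex p A)) (w (length x))) (trans (sw_ex p A) (r x))"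
      using s eq by (cases "p \<in> w' (length x)") auto
  qed (use run in \<open>auto simp: is_run_def\<close>)
  moreover have "accepting (sw_ex p A) T r" using ac by (simp add: accepting_def)
  ultimately show ?thesis using wk unfolding lang_def by auto
qed

lemma all_sub:
  assumes p: "p \<in> alph A" and w: "w \<in> lang (sw_all p A)"
  shows "w \<in> all_lang p A"
proof -
  from w obtain T r where run: "is_run (sw_all p A) w T r" and ac: "accepting (sw_all p A) T r"
    and wk: "\<forall>k. w k \<subseteq> alph A - {p}"
    unfolding lang_def by auto
  have "w' \<in> lang A" if w'a: "\<forall>k. w' k \<subseteq> alph A" and w'w: "\<forall>k. w' k - {p} = w k" for w'
  proof -
    have "is_run A w' T r"
      unfolding is_run_def
    proof (intro conjI ballI)
      fix x assume x: "x \<in> T"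
      let ?X = "{St (r (x @ [i])) | i. x @ [i] \<in> T}"
      have s: "sat (?X \<union> true_lits (alph A - {p}) (w (length x))) (PAnd (subst p True (trans A (r x))) (subst p False (trans A (r x))))"
        using run x unfolding is_run_def by auto
      have eq: "sat (?X \<union> true_lits (alph A - {p}) (w (length x))) (subst p (p \<in> w' (length x)) (trans A (r x)))
        = sat (?X \<union> true_lits (alph A) (w' (length x))) (trans A (r x))"
        by (rule sat_subst) (use p wk w'w in auto)
      show "sat (?X \<union> true_lits (alph A) (w' (length x))) (trans A (r x))"
        using s eq by (cases "p \<in> w' (length x)") auto
    qed (use run in \<open>auto simp: is_run_def\<close>)
    moreover have "accepting A T r" using ac by (simp add: accepting_def)
    ultimately show ?thesis using w'a unfolding lang_def by auto
  qed
  then show ?thesis using wk unfolding all_lang_def by auto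
qed


lemma rep_snoc: "(x @ [i] \<in> range (\<lambda>n. replicate n (0::nat))) = (x \<in> range (\<lambda>n. replicate n (0::nat)) \<and> i = 0)"
proof
  assume "x @ [i] \<in> range (\<lambda>n. replicate n (0::nat))"
  then obtain n where n: "x @ [i] = replicate n 0" by auto
  then obtain m where m: "n = Suc m" by (cases n) auto
  have "replicate n (0::nat) = replicate m 0 @ [0]" using m by (simp add: replicate_append_same)
  with n show "x \<in> range (\<lambda>n. replicate n (0::nat)) \<and> i = 0" by auto
next
  assume "x \<in> range (\<lambda>n. replicate n (0::nat)) \<and> i = 0"
  then obtain n where "x = replicate n 0" "i = 0" by auto
  then show "x @ [i] \<in> range (\<lambda>n. replicate n (0::nat))"
    by (auto intro!: image_eqI[where x="Suc n"] simp: replicate_append_same)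
qed

lemma nd_sub:
  assumes p: "p \<in> alph A" and nd: "nondet A" and w: "w \<in> lang (sw_ex p A)"
  shows "w \<in> ex_lang p A"
proof -
  from w obtain T r where run: "is_run (sw_ex p A) w T r" and ac: "accepting (sw_ex p A) T r"
    and wk: "\<forall>k. w k \<subseteq> alph A - {p}"
    unfolding lang_def by auto
  define \<sigma> where "\<sigma> b k = (if b then insert p (w k) else w k)" for b k
  have \<sigma>a: "\<sigma> b k \<subseteq> alph A" for b k using wk p by (auto simp: \<sigma>_def)
  have rs: "\<And>x. x \<in> T \<Longrightarrow> r x \<in> states A" using run by (auto simp: is_run_def)
  have step: "\<exists>ib. x @ [fst ib] \<in> T \<and> sat ({St (r (x @ [fst ib]))} \<union> true_lits (alph A) (\<sigma> (snd ib) (length x))) (trans A (r x))"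
    if x: "x \<in> T" for x
  proof -
    define S where "S = {r (x @ [i]) | i. x @ [i] \<in> T}"
    have SX: "{St (r (x @ [i])) | i. x @ [i] \<in> T} = St ` S" unfolding S_def by auto
    have Ss: "S \<subseteq> states A" unfolding S_def using rs by blast
    have s: "sat (St ` S \<union> true_lits (alph A - {p}) (w (length x))) (POr (subst p True (trans A (r x))) (subst p False (trans A (r x))))"
    proof -
      have "sat ({St (r (x @ [i])) | i. x @ [i] \<in> T} \<union> true_lits (alph (sw_ex p A)) (w (length x))) (trans (sw_ex p A) (r x))"
        using run x unfolding is_run_def by blast
      then show ?thesis unfolding SX by simp
    qed
    then obtain b where sb: "sat (St ` S \<union> true_lits (alph A - {p}) (w (length x))) (subst p b (trans A (r x)))"
      by auto
    have eq: "sat (St ` S \<union> true_lits (alph A - {p}) (w (length x))) (subst p b (trans A (r x)))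
       = sat (St ` S \<union> true_lits (alph A) (\<sigma> b (length x))) (trans A (r x))"
      by (rule sat_subst) (use p wk in \<open>auto simp: \<sigma>_def\<close>)
    obtain D where D: "D \<subseteq> states A" and DS: "\<forall>S' \<subseteq> states A.
      sat (St ` S' \<union> true_lits (alph A) (\<sigma> b (length x))) (trans A (r x)) \<longleftrightarrow> S' \<inter> D \<noteq> {}"
      using nd[unfolded nondet_def, rule_format, OF rs[OF x] \<sigma>a[of b "length x"]] by (elim exE conjE) (rule that)
    have "sat (St ` S \<union> true_lits (alph A) (\<sigma> b (length x))) (trans A (r x))" using sb eq by simp
    then have "S \<inter> D \<noteq> {}" using DS[rule_format, OF Ss] by simp
    then obtain i where i: "x @ [i] \<in> T" "r (x @ [i]) \<in> D" unfolding S_def by blast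
    have "sat (St ` {r (x @ [i])} \<union> true_lits (alph A) (\<sigma> b (length x))) (trans A (r x))"
      using DS[rule_format, of "{r (x @ [i])}"] i rs by simp
    then show ?thesis using i by (intro exI[where x="(i,b)"]) auto
  qed
  define nxt where "nxt x = (SOME ib. x @ [fst ib] \<in> T \<and> sat ({St (r (x @ [fst ib]))} \<union> true_lits (alph A) (\<sigma> (snd ib) (length x))) (trans A (r x)))" for x
  have nxtp: "x @ [fst (nxt x)] \<in> T \<and> sat ({St (r (x @ [fst (nxt x)]))} \<union> true_lits (alph A) (\<sigma> (snd (nxt x)) (length x))) (trans A (r x))"
    if "x \<in> T" for x
    unfolding nxt_def by (rule someI_ex) (rule step[OF that])
  define \<pi> where "\<pi> = rec_nat [] (\<lambda>n y. y @ [fst (nxt y)])"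
  have \<pi>0: "\<pi> 0 = []" and \<pi>S: "\<And>n. \<pi> (Suc n) = \<pi> n @ [fst (nxt (\<pi> n))]" by (simp_all add: \<pi>_def)
  have \<pi>T: "\<pi> n \<in> T \<and> length (\<pi> n) = n" for n
  proof (induction n)
    case 0 then show ?case using run \<pi>0 by (simp add: is_run_def)
  next
    case (Suc n) then show ?case using nxtp \<pi>S by simp
  qed
  define w' where "w' n = \<sigma> (snd (nxt (\<pi> n))) n" for n
  define T' where "T' = range (\<lambda>n. replicate n (0::nat))"
  define r' where "r' (x::nat list) = r (\<pi> (length x))" for x
  have ch: "{St (r' (x @ [i])) | i. x @ [i] \<in> T'} = {St (r (\<pi> (Suc (length x))))}" if "x \<in> T'" for x
    using that unfolding T'_def r'_def by (auto simp: rep_snoc)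
  have "is_run A w' T' r'"
    unfolding is_run_def
  proof (intro conjI ballI allI impI)
    show "[] \<in> T'" unfolding T'_def by (auto intro!: image_eqI[where x=0])
    show "x \<in> T'" if "x @ [i] \<in> T'" for x i using that unfolding T'_def by (simp add: rep_snoc)
    show "r' [] = init A" using run \<pi>0 by (simp add: r'_def is_run_def)
    show "r' x \<in> states A" for x using rs \<pi>T by (simp add: r'_def)
    fix x assume x: "x \<in> T'"
    have "sat ({St (r (\<pi> (Suc (length x))))} \<union> true_lits (alph A) (w' (length x))) (trans A (r' x))"
      using nxtp[of "\<pi> (length x)"] \<pi>T[of "length x"] \<pi>S unfolding w'_def r'_def by simp
    then show "sat ({St (r' (x @ [i])) | i. x @ [i] \<in> T'} \<union> true_lits (alph A) (w' (length x))) (trans A (r' x))"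
      unfolding ch[OF x] by simp
  qed
  moreover have "accepting A T' r'"
    unfolding accepting_def
  proof (intro allI impI)
    fix \<rho> assume b: "is_branch T' \<rho>"
    have \<rho>n: "\<rho> n = replicate n 0" for n
    proof (induction n)
      case 0 then show ?case using b by (simp add: is_branch_def)
    next
      case (Suc n)
      from b obtain i where "\<rho> (Suc n) = \<rho> n @ [i]" "\<rho> (Suc n) \<in> T'" unfolding is_branch_def by blast
      then show ?case using Suc unfolding T'_def by (simp add: rep_snoc replicate_append_same)
    qed
    have "is_branch T \<pi>" unfolding is_branch_def using \<pi>0 \<pi>S \<pi>T by blast
    then have "\<exists>\<^sub>\<infinity>n. r (\<pi> n) \<in> acc A" using ac by (simp add: accepting_def)
    then show "\<exists>\<^sub>\<infinity>n. r' (\<rho> n) \<in> acc A" by (simp add: \<rho>n r'_def)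
  qed
  ultimately have "w' \<in> lang A" using \<sigma>a unfolding lang_def w'_def by auto
  moreover have "\<forall>k. w' k - {p} = w k" using wk by (auto simp: w'_def \<sigma>_def)
  moreover have "\<forall>k. w' k \<subseteq> alph A" using \<sigma>a by (simp add: w'_def)
  ultimately show ?thesis using wk unfolding ex_lang_def by blast
qed


fun lab :: "('q \<Rightarrow> nat \<Rightarrow> 'q list) \<Rightarrow> 'q \<Rightarrow> nat \<Rightarrow> nat list \<Rightarrow> 'q" where
  "lab L q k [] = q"
| "lab L q k (i # xs) = lab L (L q k ! i) (Suc k) xs"

fun valid :: "('q \<Rightarrow> nat \<Rightarrow> 'q list) \<Rightarrow> 'q \<Rightarrow> nat \<Rightarrow> nat list \<Rightarrow> bool" where
  "valid L q k [] = True"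
| "valid L q k (i # xs) = (i < length (L q k) \<and> valid L (L q k ! i) (Suc k) xs)"

lemma lab_snoc: "lab L q k (x @ [i]) = L (lab L q k x) (k + length x) ! i"
  by (induction x arbitrary: q k) auto

lemma valid_snoc: "valid L q k (x @ [i]) = (valid L q k x \<and> i < length (L (lab L q k x) (k + length x)))"
  by (induction x arbitrary: q k) auto

lemma uni_sub:
  assumes wf: "aba_wf A" and p: "p \<in> alph A" and un: "universal A" and w: "w \<in> all_lang p A"
  shows "w \<in> lang (sw_all p A)"
proof -
  have wk: "\<forall>k. w k \<subseteq> alph A - {p}" using w by (simp add: all_lang_def)
  have wl: "\<And>w'. \<forall>k. w' k \<subseteq> alph A \<Longrightarrow> \<forall>k. w' k - {p} = w k \<Longrightarrow> w' \<in> lang A"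
    using w by (simp add: all_lang_def)
  have fin: "finite (states A)" and q0: "init A \<in> states A" using wf by (auto simp: aba_wf_def)
  define D where "D q \<sigma> = (SOME D. D \<subseteq> states A \<and> (\<forall>S\<subseteq>states A.
      sat (St ` S \<union> true_lits (alph A) \<sigma>) (trans A q) \<longleftrightarrow> D \<subseteq> S))" for q \<sigma>
  have Dp: "D q \<sigma> \<subseteq> states A \<and> (\<forall>S\<subseteq>states A.
      sat (St ` S \<union> true_lits (alph A) \<sigma>) (trans A q) \<longleftrightarrow> D q \<sigma> \<subseteq> S)"
    if "q \<in> states A" "\<sigma> \<subseteq> alph A" for q \<sigma>
    unfolding D_def by (rule someI_ex) (rule un[unfolded universal_def, rule_format, OF that])
  define Dall where "Dall q k = D q (insert p (w k)) \<union> D q (w k)" for q k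
  have ins: "insert p (w k) \<subseteq> alph A" "w k \<subseteq> alph A" for k using wk p by auto
  have Dalls: "Dall q k \<subseteq> states A" if "q \<in> states A" for q k
    using conjunct1[OF Dp[OF that ins(1)]] conjunct1[OF Dp[OF that ins(2)]] unfolding Dall_def by (rule Un_least)
  define L where "L q k = (SOME l. set l = Dall q k)" for q k
  have L: "set (L q k) = Dall q k" if "q \<in> states A" for q k
    unfolding L_def by (rule someI_ex) (rule finite_list, rule finite_subset[OF Dalls[OF that] fin])
  define T where "T = {x. valid L (init A) 0 x}"
  define r where "r = lab L (init A) 0"
  have rs: "x \<in> T \<Longrightarrow> r x \<in> states A" for x
  proof (induction x rule: rev_induct)
    case Nil then show ?case using q0 by (simp add: r_def)
  next
    case (snoc i x)
    then have xT: "x \<in> T" and il: "i < length (L (r x) (length x))"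
      by (auto simp: T_def valid_snoc r_def)
    have "r (x @ [i]) \<in> set (L (r x) (length x))" using il by (simp add: r_def lab_snoc)
    then show ?case using L[OF snoc.IH[OF xT]] Dalls[OF snoc.IH[OF xT]] by auto
  qed
  have ch: "{St (r (x @ [i])) | i. x @ [i] \<in> T} = St ` Dall (r x) (length x)" if x: "x \<in> T" for x
  proof -
    have "{St (r (x @ [i])) | i. x @ [i] \<in> T} = St ` {L (r x) (length x) ! i | i. i < length (L (r x) (length x))}"
      using x by (auto simp: T_def valid_snoc r_def lab_snoc)
    also have "{L (r x) (length x) ! i | i. i < length (L (r x) (length x))} = set (L (r x) (length x))"
      by (auto simp: set_conv_nth)
    finally show ?thesis using L[OF rs[OF x]] by simp
  qed
  have "is_run (sw_all p A) w T r"
    unfolding is_run_def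
  proof (intro conjI ballI allI impI)
    show "[] \<in> T" by (simp add: T_def)
    show "x \<in> T" if "x @ [i] \<in> T" for x i using that by (simp add: T_def valid_snoc)
    show "r [] = init (sw_all p A)" by (simp add: r_def)
    show "r x \<in> states (sw_all p A)" if "x \<in> T" for x using rs[OF that] by simp
    fix x assume x: "x \<in> T"
    have rx: "r x \<in> states A" using rs[OF x] .
    have "sat (St ` Dall (r x) (length x) \<union> true_lits (alph A - {p}) (w (length x))) (subst p b (trans A (r x)))" for b
    proof -
      define \<sigma> where "\<sigma> = (if b then insert p (w (length x)) else w (length x))"
      have \<sigma>a: "\<sigma> \<subseteq> alph A" using ins by (simp add: \<sigma>_def)
      have eq: "sat (St ` Dall (r x) (length x) \<union> true_lits (alph A - {p}) (w (length x))) (subst p b (trans A (r x)))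
        = sat (St ` Dall (r x) (length x) \<union> true_lits (alph A) \<sigma>) (trans A (r x))"
        by (rule sat_subst) (use p wk in \<open>auto simp: \<sigma>_def\<close>)
      have "D (r x) \<sigma> \<subseteq> Dall (r x) (length x)" by (auto simp: Dall_def \<sigma>_def)
      then have "sat (St ` Dall (r x) (length x) \<union> true_lits (alph A) \<sigma>) (trans A (r x))"
        using Dp[OF rx \<sigma>a] Dalls[OF rx] by simp
      then show ?thesis using eq by simp
    qed
    then show "sat ({St (r (x @ [i])) | i. x @ [i] \<in> T} \<union> true_lits (alph (sw_all p A)) (w (length x))) (trans (sw_all p A) (r x))"
      unfolding ch[OF x] by simp
  qed
  moreover have "accepting (sw_all p A) T r"
    unfolding accepting_def
  proof (intro allI impI)
    fix \<pi> assume b: "is_branch T \<pi>"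
    have \<pi>T: "\<pi> n \<in> T \<and> length (\<pi> n) = n" for n
    proof (induction n)
      case 0 then show ?case using b by (simp add: is_branch_def T_def)
    next
      case (Suc n)
      from b obtain i where "\<pi> (Suc n) = \<pi> n @ [i]" "\<pi> (Suc n) \<in> T" unfolding is_branch_def by blast
      then show ?case using Suc by simp
    qed
    define q where "q n = r (\<pi> n)" for n
    have qs: "q n \<in> states A" for n using rs \<pi>T by (simp add: q_def)
    have qstep: "q (Suc n) \<in> Dall (q n) n" for n
    proof -
      from b obtain i where i: "\<pi> (Suc n) = \<pi> n @ [i]" "\<pi> (Suc n) \<in> T" unfolding is_branch_def by blast
      have "St (q (Suc n)) \<in> {St (r (\<pi> n @ [i])) | i. \<pi> n @ [i] \<in> T}" using i by (auto simp: q_def)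
      then show ?thesis unfolding ch[OF conjunct1[OF \<pi>T[of n]]] using \<pi>T[of n] by (auto simp: q_def)
    qed
    define w' where "w' n = (if q (Suc n) \<in> D (q n) (insert p (w n)) then insert p (w n) else w n)" for n
    have w'a: "w' n \<subseteq> alph A" for n using ins by (simp add: w'_def)
    have qD: "q (Suc n) \<in> D (q n) (w' n)" for n
      using qstep[of n] by (auto simp: w'_def Dall_def)
    have "w' \<in> lang A"
      by (rule wl) (use w'a wk in \<open>auto simp: w'_def\<close>)
    then obtain T1 r1 where run1: "is_run A w' T1 r1" and ac1: "accepting A T1 r1"
      unfolding lang_def by blast
    have step1: "\<exists>i. x @ [i] \<in> T1 \<and> r1 (x @ [i]) = q (Suc (length x))"
      if x: "x \<in> T1" and rx: "r1 x = q (length x)" for x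
    proof -
      define S where "S = {r1 (x @ [i]) | i. x @ [i] \<in> T1}"
      have SX: "{St (r1 (x @ [i])) | i. x @ [i] \<in> T1} = St ` S" unfolding S_def by auto
      have rs1: "\<And>y. y \<in> T1 \<Longrightarrow> r1 y \<in> states A" using run1 by (simp add: is_run_def)
      have Ss: "S \<subseteq> states A" unfolding S_def using rs1 by blast
      have "sat ({St (r1 (x @ [i])) | i. x @ [i] \<in> T1} \<union> true_lits (alph A) (w' (length x))) (trans A (r1 x))"
        using run1 x unfolding is_run_def by blast
      then have "sat (St ` S \<union> true_lits (alph A) (w' (length x))) (trans A (q (length x)))"
        unfolding SX rx .
      then have "D (q (length x)) (w' (length x)) \<subseteq> S"
        using conjunct2[OF Dp[OF qs w'a], rule_format, OF Ss] by simp
      then have "q (Suc (length x)) \<in> S" using qD by blast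
      then show ?thesis unfolding S_def by auto
    qed
    define \<rho> where "\<rho> = rec_nat [] (\<lambda>n y. y @ [SOME i. y @ [i] \<in> T1 \<and> r1 (y @ [i]) = q (Suc n)])"
    have \<rho>0: "\<rho> 0 = []" and \<rho>S: "\<And>n. \<rho> (Suc n) = \<rho> n @ [SOME i. \<rho> n @ [i] \<in> T1 \<and> r1 (\<rho> n @ [i]) = q (Suc n)]"
      by (simp_all add: \<rho>_def)
    have \<rho>T: "\<rho> n \<in> T1 \<and> length (\<rho> n) = n \<and> r1 (\<rho> n) = q n" for n
    proof (induction n)
      case 0 then show ?case using run1 \<rho>0 b by (simp add: is_run_def q_def r_def is_branch_def)
    next
      case (Suc n)
      then have "\<exists>i. \<rho> n @ [i] \<in> T1 \<and> r1 (\<rho> n @ [i]) = q (Suc n)" using step1 by metis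
      then have "\<rho> n @ [SOME i. \<rho> n @ [i] \<in> T1 \<and> r1 (\<rho> n @ [i]) = q (Suc n)] \<in> T1 \<and>
          r1 (\<rho> n @ [SOME i. \<rho> n @ [i] \<in> T1 \<and> r1 (\<rho> n @ [i]) = q (Suc n)]) = q (Suc n)"
        by (rule someI_ex)
      then show ?case using Suc \<rho>S by simp
    qed
    have "is_branch T1 \<rho>" unfolding is_branch_def using \<rho>0 \<rho>S \<rho>T by blast
    then have "\<exists>\<^sub>\<infinity>n. r1 (\<rho> n) \<in> acc A" using ac1 by (simp add: accepting_def)
    then show "\<exists>\<^sub>\<infinity>n. r (\<pi> n) \<in> acc (sw_all p A)" using \<rho>T by (simp add: q_def)
  qed
  ultimately show ?thesis using wk unfolding lang_def by auto
qed

lemma det_nd: "deterministic A \<Longrightarrow> nondet A"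
  unfolding nondet_def
proof (intro ballI allI impI)
  fix q \<sigma> assume d: "deterministic A" and q: "q \<in> states A" and s: "\<sigma> \<subseteq> alph A"
  obtain q' where q': "q' \<in> states A" and e: "\<forall>S \<subseteq> states A.
      sat (St ` S \<union> true_lits (alph A) \<sigma>) (trans A q) \<longleftrightarrow> q' \<in> S"
    using d[unfolded deterministic_def, rule_format, OF q s] by (elim bexE) (rule that)
  show "\<exists>D\<subseteq>states A. \<forall>S\<subseteq>states A. sat (St ` S \<union> true_lits (alph A) \<sigma>) (trans A q) = (S \<inter> D \<noteq> {})"
    using q' e by (intro exI[of _ "{q'}"]) auto
qed

lemma det_un: "deterministic A \<Longrightarrow> universal A"
  unfolding universal_def
proof (intro ballI allI impI)
  fix q \<sigma> assume d: "deterministic A" and q: "q \<in> states A" and s: "\<sigma> \<subseteq> alph A"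
  obtain q' where q': "q' \<in> states A" and e: "\<forall>S \<subseteq> states A.
      sat (St ` S \<union> true_lits (alph A) \<sigma>) (trans A q) \<longleftrightarrow> q' \<in> S"
    using d[unfolded deterministic_def, rule_format, OF q s] by (elim bexE) (rule that)
  show "\<exists>D\<subseteq>states A. \<forall>S\<subseteq>states A. sat (St ` S \<union> true_lits (alph A) \<sigma>) (trans A q) = (D \<subseteq> S)"
    using q' e by (intro exI[of _ "{q'}"]) auto
qed

theorem mainTheorem1:
  fixes A :: "('q, 'v) aba" and p :: 'v
  assumes "aba_wf A" and "p \<in> alph A"
  shows "(nondet A \<longrightarrow> ex_nf p A)
       \<and> (universal A \<longrightarrow> all_nf p A)
       \<and> (deterministic A \<longrightarrow> ex_nf p A \<and> all_nf p A)"
proof -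
  have E: "ex_nf p A" if "nondet A"
    unfolding ex_nf_def using nd_sub[OF assms(2) that] ex_sub[OF assms(2)] by blast
  have U: "all_nf p A" if "universal A"
    unfolding all_nf_def using uni_sub[OF assms(1,2) that] all_sub[OF assms(2)] by blast
  show ?thesis using E U det_nd det_un by blast
qed

end
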